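(* For every integer $r\ge2$, $$\int_0^{\frac\pi2} \theta^{r-2}\log\left(\cos\frac\theta2\right)d\theta=-\frac{\pi^{r-1}}{r-1}\left(\frac1{2^r}\log2+2^{r-1}\log\mathcal C_r\left(\frac14\right)\right).$$
   Context: For an integer $r\ge2$ let $P_r(y)=(1-y)\exp\left(y+\frac{y^2}{2}+\cdots+\frac{y^r}{r}\right)$. The multiple cosine function of Kurokawa–Koyama of order $r\ge2$ is $\mathcal C_r(x)=\prod_{n\ge1,\ n\text{ odd}}\left\{P_r\left(\frac{x}{n/2}\right)P_r\left(-\frac{x}{n/2}\right)^{(-1)^{r-1}}\right\}^{(n/2)^{r-1}}$, interpreted as $\mathcal C_r(x)=\exp\Big(\sum_{n\ge1,\,n\text{ odd}}(n/2)^{r-1}\big[\operatorname{Log}P_r(2x/n)+(-1)^{r-1}\operatorname{Log}P_r(-2x/n)\big]\Big)$, where $\operatorname{Log}P_r(y):=\operatorname{Log}(1-y)+y+\frac{y^2}{2}+\cdots+\frac{y^r}{r}$ with $\operatorname{Log}$ the principal branch. The series converges and defines a holomorphic function on $D=\mathbb C\setminus\big((-\infty,-\tfrac12]\cup[\tfrac12,\infty)\big)$, positive on $(-\tfrac12,\tfrac12)$; $\log\mathcal C_r(x)$ denotes the exponent above (the real logarithm for real $|x|<\tfrac12$). *)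

theory Defs
  imports "HOL-Analysis.Analysis"
begin

definition LogP :: "nat \<Rightarrow> complex \<Rightarrow> complex" where
  "LogP r y = Ln (1 - y) + (\<Sum>j=1..r. y ^ j / of_nat j)"

text \<open>log of the multiple cosine C_r(x): sum over odd n = 2k+1 of
  (n/2)^(r-1) [Log P_r(2x/n) + (-1)^(r-1) Log P_r(-2x/n)].\<close>
definition logC :: "nat \<Rightarrow> complex \<Rightarrow> complex" where
  "logC r x = (\<Sum>k. (of_nat (2*k+1) / 2) ^ (r - 1) *
      (LogP r (2 * x / of_nat (2*k+1)) + (-1) ^ (r - 1) * LogP r (- 2 * x / of_nat (2*k+1))))"

end

theory Submission
  imports Defs
begin



lemma prod_split_even_odd:
  fixes f :: "nat \<Rightarrow> real"
  shows "(\<Prod>k=1..2*N. f k) = (\<Prod>k=1..N. f (2*k)) * (\<Prod>j<N. f (2*j+1))"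
proof (induction N)
  case 0 then show ?case by simp
next
  case (Suc N)
  have e: "2 * Suc N = Suc (Suc (2*N))" by simp
  show ?case unfolding e using Suc by (simp add: prod.nat_ivl_Suc' mult_ac)
qed

lemma cos_prod:
  fixes t :: real
  assumes "\<bar>t\<bar> < pi"
  shows "(\<lambda>N. \<Prod>j<N. 1 - t^2 / (pi^2 * real (2*j+1)^2)) \<longlonglongrightarrow> cos (t/2)"
proof (cases "t = 0")
  case True then show ?thesis by simp
next
  case False
  define z where "z = t / pi"
  have z0: "z \<noteq> 0" using False by (simp add: z_def)
  have z1: "\<bar>z\<bar> < 1" using assms pi_gt_zero by (simp add: z_def abs_divide)
  have pz: "pi * z = t" by (simp add: z_def)
  define P where "P N = (\<Prod>k=1..N. 1 - z^2 / of_nat k^2)" for N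
  define Q where "Q N = (\<Prod>k=1..N. 1 - (z/2)^2 / of_nat k^2)" for N
  have P: "P \<longlonglongrightarrow> sin t / t" unfolding P_def using sin_product_formula_real'[OF z0] pz by simp
  have "(P \<circ> (\<lambda>N. 2*N)) \<longlonglongrightarrow> sin t / t"
    by (rule LIMSEQ_subseq_LIMSEQ[OF P]) (auto simp: strict_mono_def)
  hence P2: "(\<lambda>N. P (2*N)) \<longlonglongrightarrow> sin t / t" by (simp add: o_def)
  have z2: "z/2 \<noteq> 0" using z0 by simp
  have Q: "Q \<longlonglongrightarrow> sin (t/2) / (t/2)" unfolding Q_def using sin_product_formula_real'[OF z2] pz
    by (simp add: mult.commute)
  have st: "sin (t/2) \<noteq> 0"
  proof
    assume "sin (t/2) = 0"
    then obtain n::int where "t/2 = of_int n * pi" by (auto simp: sin_zero_iff_int2)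
    moreover have "\<bar>t/2\<bar> < pi" using assms by simp
    ultimately have "\<bar>of_int n\<bar> < (1::real)" using pi_gt_zero by (simp add: abs_mult)
    hence "n = 0" by linarith
    thus False using \<open>t/2 = _\<close> False by simp
  qed
  have lim: "sin t / t / (sin (t/2) / (t/2)) = cos (t/2)"
  proof -
    have "sin t = 2 * sin (t/2) * cos (t/2)" using sin_double[of "t/2"] by simp
    thus ?thesis using st False by (simp add: field_simps)
  qed
  have Qpos: "Q N > 0" for N
    unfolding Q_def
  proof (rule prod_pos)
    fix k assume "k \<in> {1..N}"
    hence k: "real k \<ge> 1" by simp
    have "(z/2)^2 < 1" using z1 by (simp add: power2_eq_square abs_less_iff) (smt (verit) mult_less_cancel_right2 mult_minus_left mult_minus_right)
    also have "1 \<le> real k ^ 2" using k by simp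
    finally show "0 < 1 - (z/2)^2 / of_nat k ^ 2" using k by simp
  qed
  have "(\<lambda>N. P (2*N) / Q N) \<longlonglongrightarrow> sin t / t / (sin (t/2) / (t/2))"
    by (rule tendsto_divide[OF P2 Q]) (use st False in simp)
  moreover have "P (2*N) / Q N = (\<Prod>j<N. 1 - t^2 / (pi^2 * real (2*j+1)^2))" for N
  proof -
    have "P (2*N) = Q N * (\<Prod>j<N. 1 - z^2 / real (2*j+1)^2)"
      unfolding P_def Q_def prod_split_even_odd
      by (intro arg_cong2[where f="(*)"] prod.cong) (auto simp: power_divide power_mult_distrib)
    moreover have "(\<Prod>j<N. 1 - z^2 / real (2*j+1)^2) = (\<Prod>j<N. 1 - t^2 / (pi^2 * real (2*j+1)^2))"
      by (intro prod.cong) (auto simp: z_def power_divide)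
    ultimately show ?thesis using Qpos[of N] by simp
  qed
  ultimately show ?thesis using lim by simp
qed



definition LPr :: "nat \<Rightarrow> real \<Rightarrow> real" where
  "LPr r y = ln (1 - y) + (\<Sum>j=1..r. y ^ j / of_nat j)"

lemma sum_shift_geom: "(\<Sum>j=1..r. (y::real) ^ (j - 1)) = (\<Sum>i<r. y ^ i)"
proof (induction r)
  case 0 then show ?case by simp
next
  case (Suc r) then show ?case by (simp add: sum.atLeast1_atMost_eq)
qed

lemma LPr_deriv:
  assumes "y < 1"
  shows "(LPr r has_real_derivative (-(y ^ r) / (1 - y))) (at y)"
proof -
  have "(LPr r has_real_derivative (- 1 / (1 - y) + (\<Sum>j=1..r. y ^ (j - 1)))) (at y)"
    unfolding LPr_def[abs_def]
    apply (rule derivative_eq_intros refl | use assms in simp)+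
    done
  moreover have "- 1 / (1 - y) + (\<Sum>j=1..r. y ^ (j - 1)) = -(y ^ r) / (1 - y)"
    using assms unfolding sum_shift_geom sum_gp_strict by (simp add: divide_simps)
  ultimately show ?thesis by simp
qed



lemma alg_G1:
  fixes P A c Q a e :: real
  assumes cq: "c*Q = -A" and d: "1 - a \<noteq> 0" "1 + a \<noteq> 0"
  shows "P*(-A/(1-a)*e + c*(-Q/(1-(-a))*(-e))) = -(P*A)*e*(2/(1-a^2))"
proof -
  have 1: "c*(-Q/(1-(-a))*(-e)) = (c*Q)*e/(1+a)" by simp
  have 2: "1 - a^2 = (1-a)*(1+a)" by (simp add: power2_eq_square algebra_simps)
  have 3: "-A/(1-a)*e + -A*e/(1+a) = -A*e*(2/((1-a)*(1+a)))"
    using d by (simp add: divide_simps) (simp add: algebra_simps)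
  have "P*(-A/(1-a)*e + c*(-Q/(1-(-a))*(-e))) = P*(-A/(1-a)*e + -A*e/(1+a))" unfolding 1 cq by simp
  also have "\<dots> = P*(-A*e*(2/(1-a^2)))" using 3 2 by simp
  finally show ?thesis by simp
qed

lemma Fn_alg:
  fixes n x a :: real
  assumes n: "n > 0" and a: "a = 2*x/n" and a1: "a < 1" "-a < 1" and q: "r = Suc q"
  shows "(n/2)^(r-1) * (-(a ^ r) / (1 - a) * (2/n) + (-1)^(r-1) * (-((-a) ^ r) / (1 - (-a)) * (-2/n)))
      = - 8 * x^r / (n^2 - 4*x^2)"
proof -
  have m: "(-1::real)^(r-1) * (-a)^r = - (a^r)"
  proof -
    have "(-a)^r = (-1)^r * a^r" by (rule power_minus)
    moreover have "(-1::real)^(r-1) * (-1)^r = (-1)^(r-1+r)" by (simp add: power_add)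
    moreover have "r-1+r = 2*q+1" using q by simp
    ultimately show ?thesis by (simp add: mult.assoc[symmetric])
  qed
  have p: "(n/2)^(r-1) * a^r = (2/n) * x^r"
  proof -
    have "a = (2/n)*x" using a by simp
    hence "a^r = ((2/n)*x)^r" by (rule arg_cong)
    also have "\<dots> = (2/n)^r * x^r" by (rule power_mult_distrib)
    also have "(2/n)^r = (2/n)^q * (2/n)" unfolding q by (rule power_Suc2)
    finally have "a^r = ((2/n)^q * (2/n)) * x^r" .
    moreover have "(n/2)^q * (2/n)^q = 1" using n by (simp flip: power_mult_distrib)
    ultimately show ?thesis unfolding q by (metis (no_types, lifting) diff_Suc_1 mult.assoc mult.left_commute mult_1)
  qed
  have d1: "1 - a \<noteq> 0" "1 + a \<noteq> 0" using a1 by auto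
  have "(n/2)^(r-1) * (-(a ^ r) / (1 - a) * (2/n) + (-1)^(r-1) * (-((-a) ^ r) / (1 - (-a)) * (-2/n)))
        = - ((n/2)^(r-1) * a^r) * (2/n) * (2/(1-a^2))"
    using alg_G1[OF m d1, of "(n/2)^(r-1)" "2/n"] by simp
  also have "\<dots> = - (2/n) * x^r * (2/n) * (2 / (1 - a^2))"
    unfolding p by simp
  also have "\<dots> = - 8 * x^r / (n^2 - 4*x^2)"
  proof -
    have e: "1 - a^2 = (n^2 - 4*x^2)/n^2" using n unfolding a by (simp add: divide_simps power2_eq_square)
    have fa: "1 - a^2 = (1-a)*(1+a)" by (simp add: power2_eq_square algebra_simps)
    have "1 - a^2 \<noteq> 0" unfolding fa using d1 by simp
    hence ne: "n^2 - 4*x^2 \<noteq> 0" unfolding e by auto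
    show ?thesis unfolding e using n ne by (simp add: divide_simps power2_eq_square)
  qed
  finally show ?thesis .
qed


lemma LPr_deriv_chain[derivative_intros]:
  "(f has_real_derivative f') (at x) \<Longrightarrow> f x < 1 \<Longrightarrow>
   ((\<lambda>x. LPr r (f x)) has_real_derivative (-(f x ^ r) / (1 - f x) * f')) (at x)"
  by (rule DERIV_chain2[OF LPr_deriv]) auto

definition Fn :: "nat \<Rightarrow> real \<Rightarrow> real \<Rightarrow> real" where
  "Fn r n x = (n/2)^(r-1) * (LPr r (2*x/n) + (-1)^(r-1) * LPr r (-2*x/n))"

lemma Fn_deriv:
  assumes r: "r \<ge> 1" and n: "n > 0" and x: "\<bar>2*x/n\<bar> < 1"
  shows "(Fn r n has_real_derivative (- 8 * x^r / (n^2 - 4*x^2))) (at x)"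
proof -
  obtain s where s: "r = Suc s" using r by (cases r) auto
  define a where "a = 2*x/n"
  have a1: "a < 1" "-a < 1" using x unfolding a_def abs_less_iff by auto
  have "(Fn r n has_real_derivative
     (n/2)^(r-1) * (-(a ^ r) / (1 - a) * (2/n) + (-1)^(r-1) * (-((-a) ^ r) / (1 - (-a)) * (-2/n)))) (at x)"
  proof -
    have i1: "((\<lambda>x. 2*x/n) has_real_derivative (2/n)) (at x)"
      apply (rule derivative_eq_intros refl)+ using n by (auto simp: field_simps)
    have i2: "((\<lambda>x. -2*x/n) has_real_derivative (-2/n)) (at x)"
      apply (rule derivative_eq_intros refl)+ using n by (auto simp: field_simps)
    have l1: "((\<lambda>x. LPr r (2*x/n)) has_real_derivative (-(a ^ r) / (1 - a) * (2/n))) (at x)"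
      using DERIV_chain2[OF LPr_deriv[of "2*x/n" r] i1] a1 unfolding a_def by simp
    have l2: "((\<lambda>x. LPr r (-2*x/n)) has_real_derivative (-((-a) ^ r) / (1 - (-a)) * (-2/n))) (at x)"
      using DERIV_chain2[OF LPr_deriv[of "-2*x/n" r] i2] a1 unfolding a_def by simp
    show ?thesis unfolding Fn_def[abs_def]
      by (intro DERIV_cmult DERIV_add l1 l2)
  qed
  moreover have "(n/2)^(r-1) * (-(a ^ r) / (1 - a) * (2/n) + (-1)^(r-1) * (-((-a) ^ r) / (1 - (-a)) * (-2/n))) = - 8 * x^r / (n^2 - 4*x^2)"
    using Fn_alg[OF n a_def a1 s] .
  ultimately show ?thesis by simp
qed




definition gk :: "nat \<Rightarrow> real \<Rightarrow> real" where
  "gk k t = ln (1 - t^2 / (pi^2 * real (2*k+1)^2))"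

lemma gk_pos:
  assumes "\<bar>t\<bar> < pi"
  shows "0 < 1 - t^2 / (pi^2 * real (2*k+1)^2)" "t^2 / (pi^2 * real (2*k+1)^2) < 1"
proof -
  have "\<bar>t\<bar>^2 < pi^2" by (rule power_strict_mono) (use assms in auto)
  hence t2: "t^2 < pi^2" by simp
  have "pi^2 * 1 \<le> pi^2 * real (2*k+1)^2" by (intro mult_left_mono) auto
  hence "t^2 < pi^2 * real (2*k+1)^2" using t2 by linarith
  thus "t^2 / (pi^2 * real (2*k+1)^2) < 1" by (simp add: divide_less_eq)
  thus "0 < 1 - t^2 / (pi^2 * real (2*k+1)^2)" by simp
qed

lemma gk_sums:
  assumes t: "\<bar>t\<bar> < pi"
  shows "(\<lambda>k. gk k t) sums ln (cos (t/2))"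
proof -
  have c: "cos (t/2) > 0" by (rule cos_gt_zero_pi) (use t in auto)
  have "(\<lambda>N. ln (\<Prod>j<N. 1 - t^2 / (pi^2 * real (2*j+1)^2))) \<longlonglongrightarrow> ln (cos (t/2))"
    by (rule tendsto_ln[OF cos_prod[OF t]]) (use c in simp)
  moreover have "ln (\<Prod>j<N. 1 - t^2 / (pi^2 * real (2*j+1)^2)) = (\<Sum>j<N. gk j t)" for N
    unfolding gk_def by (rule ln_prod) (simp, smt (verit) gk_pos(1)[OF t])
  ultimately show ?thesis unfolding sums_def by simp
qed

lemma gk_nonpos: assumes "\<bar>t\<bar> < pi" shows "gk k t \<le> 0"
  unfolding gk_def using gk_pos[OF assms, of k] by (simp add: ln_le_zero_iff)

lemma LPr_0: "LPr r 0 = 0"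
  unfolding LPr_def by (simp add: sum.neutral)

lemma Fn_0: "Fn r n 0 = 0"
  unfolding Fn_def by (simp add: LPr_0)



lemma term_alg:
  fixes t pi n :: real and m :: nat
  assumes p: "pi > 0" and n: "n > 0" and ne: "pi^2*n^2 - t^2 \<noteq> 0"
  shows "t^(m+1) * (-(2*t) / (pi^2*n^2 - t^2)) =
         (2*pi)^(m+1) * (- 8 * (t/(2*pi))^(m+2) / (n^2 - 4*(t/(2*pi))^2) * (1/(2*pi)))"
proof -
  have e1: "(t/(2*pi))^(m+2) = t^(m+2) / ((2*pi)^(m+1) * (2*pi))" by (simp add: power_divide)
  have e2: "n^2 - 4*(t/(2*pi))^2 = (pi^2*n^2 - t^2) / pi^2" using p by (simp add: power_divide field_simps power2_eq_square)
  have "(2*pi)^(m+1) * (- 8 * (t/(2*pi))^(m+2) / (n^2 - 4*(t/(2*pi))^2) * (1/(2*pi)))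
      = - 8 * t^(m+2) * pi^2 / ((2*pi) * (2*pi) * (pi^2*n^2 - t^2))"
    unfolding e1 e2 using p ne by (simp add: field_simps)
  also have "\<dots> = - 2 * t^(m+2) / (pi^2*n^2 - t^2)"
    using p ne by (simp add: field_simps power2_eq_square)
  also have "\<dots> = t^(m+1) * (-(2*t) / (pi^2*n^2 - t^2))"
    by (simp add: field_simps)
  finally show ?thesis ..
qed

lemma div_both:
  fixes a b c X Y :: real
  assumes "a*X = b*Y" shows "a/c*X = b/c*Y"
  unfolding times_divide_eq_left assms ..

lemma term_integral:
  fixes m k :: nat
  shows "((\<lambda>t. t^m * gk k t) has_integral
     ((pi/2)^(m+1)/(m+1) * ln (1 - 1/(4*real (2*k+1)^2))
       - (2*pi)^(m+1)/(m+1) * Fn (m+2) (real (2*k+1)) (1/4))) {0..pi/2}"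
proof -
  define n where "n = real (2*k+1)"
  have n: "n > 0" "n \<ge> 1" by (auto simp: n_def)
  define H where "H t = t^(m+1)/(m+1) * gk k t - (2*pi)^(m+1)/(m+1) * Fn (m+2) n (t/(2*pi))" for t
  have der: "(H has_real_derivative t^m * gk k t) (at t)" if t: "t \<in> {0..pi/2}" for t
  proof -
    have t0: "0 \<le> t" "t \<le> pi/2" using t by auto
    have "t < pi" using t0 pi_gt_zero by linarith
    hence tt: "\<bar>t\<bar> < pi" using t0 by (simp add: abs_of_nonneg)
    have c: "0 < 1 - t^2/(pi^2*n^2)" using gk_pos(1)[OF tt, of k] by (simp add: n_def)
    have ne: "pi^2*n^2 - t^2 \<noteq> 0" using c pi_gt_zero n by (auto simp: field_simps)
    have d1: "((\<lambda>t. t^(m+1)/(m+1)) has_real_derivative t^m) (at t)"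
      using DERIV_cdivide[OF DERIV_pow[of "m+1" t], of "real (m+1)"] by simp
    have i2: "((\<lambda>t. 1 - t^2/(pi^2*n^2)) has_real_derivative (-(2*t/(pi^2*n^2)))) (at t)"
      using DERIV_diff[OF DERIV_const[of 1] DERIV_cdivide[OF DERIV_pow[of 2 t], of "pi^2*n^2"]] by simp
    have d2: "(gk k has_real_derivative (-(2*t) / (pi^2*n^2 - t^2))) (at t)"
    proof -
      have D: "((\<lambda>t. ln (1 - t^2/(pi^2*n^2))) has_real_derivative (1 / (1 - t^2/(pi^2*n^2)) * (-(2*t/(pi^2*n^2))))) (at t)"
        by (rule DERIV_chain2[OF DERIV_ln_divide[OF c] i2])
      have EQ: "1 / (1 - t^2/(pi^2*n^2)) * (-(2*t/(pi^2*n^2))) = -(2*t) / (pi^2*n^2 - t^2)"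
        using c ne n pi_gt_zero by (simp add: field_simps)
      have G: "gk k = (\<lambda>t. ln (1 - t^2/(pi^2*n^2)))" by (auto simp: gk_def n_def fun_eq_iff)
      show ?thesis unfolding G using D unfolding EQ .
    qed
    have i3: "((\<lambda>t. t/(2*pi)) has_real_derivative (1/(2*pi))) (at t)"
      using DERIV_cdivide[OF DERIV_ident, of "2*pi"] by simp
    have xb: "\<bar>2*(t/(2*pi))/n\<bar> < 1"
    proof -
      have e: "2*(t/(2*pi))/n = t/(pi*n)" by simp
      have nn: "0 \<le> t/(pi*n)" using t n by auto
      have "t/(pi*n) \<le> (pi/2)/(pi*1)"
        using t n pi_gt_zero by (intro frac_le) (auto intro: mult_left_mono)
      hence le: "t/(pi*n) \<le> 1/2" using pi_gt_zero by simp
      have "\<bar>t/(pi*n)\<bar> = t/(pi*n)" using nn by (rule abs_of_nonneg)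
      thus ?thesis unfolding e using le by linarith
    qed
    have d3: "((\<lambda>t. Fn (m+2) n (t/(2*pi))) has_real_derivative
        (- 8 * (t/(2*pi))^(m+2) / (n^2 - 4*(t/(2*pi))^2) * (1/(2*pi)))) (at t)"
      by (rule DERIV_chain2[OF Fn_deriv i3]) (use n xb in auto)
    have "(H has_real_derivative
       (t^m * gk k t + t^(m+1)/(m+1) * (-(2*t) / (pi^2*n^2 - t^2))
        - (2*pi)^(m+1)/(m+1) * (- 8 * (t/(2*pi))^(m+2) / (n^2 - 4*(t/(2*pi))^2) * (1/(2*pi))))) (at t)"
      unfolding H_def[abs_def]
      using DERIV_diff[OF DERIV_mult[OF d1 d2] DERIV_cmult[OF d3, of "(2*pi)^(m+1)/(m+1)"]]
      by (simp add: algebra_simps)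
    moreover have "t^(m+1)/(m+1) * (-(2*t) / (pi^2*n^2 - t^2))
        = (2*pi)^(m+1)/(m+1) * (- 8 * (t/(2*pi))^(m+2) / (n^2 - 4*(t/(2*pi))^2) * (1/(2*pi)))"
      using div_both[OF term_alg[OF pi_gt_zero n(1) ne, of m], of "real (m+1)"] by simp
    ultimately show ?thesis by simp
  qed
  have "((\<lambda>t. t^m * gk k t) has_integral (H (pi/2) - H 0)) {0..pi/2}"
    by (rule fundamental_theorem_of_calculus)
       (use der pi_gt_zero in \<open>auto simp: has_real_derivative_iff_has_vector_derivative[symmetric]
            intro: has_field_derivative_at_within\<close>)
  moreover have "H 0 = 0" by (simp add: H_def Fn_0 gk_def)
  moreover have "H (pi/2) = (pi/2)^(m+1)/(m+1) * ln (1 - 1/(4*n^2))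
       - (2*pi)^(m+1)/(m+1) * Fn (m+2) n (1/4)"
  proof -
    have "(pi/2)^2/(pi^2*n^2) = 1/(4*n^2)" using pi_gt_zero by (simp add: power_divide field_simps)
    moreover have "pi/2/(2*pi) = 1/4" using pi_gt_zero by simp
    ultimately show ?thesis by (simp add: H_def gk_def n_def)
  qed
  ultimately show ?thesis by (simp add: n_def)
qed



lemma integral_sums:
  fixes m :: nat
  shows "(\<lambda>k. (pi/2)^(m+1)/(m+1) * ln (1 - 1/(4*real (2*k+1)^2))
       - (2*pi)^(m+1)/(m+1) * Fn (m+2) (real (2*k+1)) (1/4))
     sums integral {0..pi/2} (\<lambda>t. t^m * ln (cos (t/2)))"
proof -
  define I where "I k = (pi/2)^(m+1)/(m+1) * ln (1 - 1/(4*real (2*k+1)^2))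
       - (2*pi)^(m+1)/(m+1) * Fn (m+2) (real (2*k+1)) (1/4)" for k
  define f where "f N t = (\<Sum>k<N. t^m * gk k t)" for N and t :: real
  define g where "g t = t^m * ln (cos (t/2))" for t :: real
  define h where "h t = - (t^m * ln (cos (t/2)))" for t :: real
  have fint: "(f N has_integral (\<Sum>k<N. I k)) {0..pi/2}" for N
    unfolding f_def I_def by (rule has_integral_sum) (simp, rule term_integral)
  have tt: "\<bar>t\<bar> < pi" "0 \<le> t" if "t \<in> {0..pi/2}" for t
  proof -
    have t0: "0 \<le> t" "t \<le> pi/2" using that by auto
    have "t < pi" using t0 pi_gt_zero by linarith
    thus "\<bar>t\<bar> < pi" using t0 by (simp add: abs_of_nonneg)
    show "0 \<le> t" by fact
  qed
  have cpos: "cos (t/2) > 0" if "t \<in> {0..pi/2}" for t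
    by (rule cos_gt_zero_pi) (use tt[OF that] in auto)
  have hint: "h integrable_on {0..pi/2}"
  proof (rule integrable_continuous_interval)
    show "continuous_on {0..pi/2} h"
      unfolding h_def by (intro continuous_intros) (simp, metis cpos less_irrefl)
  qed
  have le: "norm (f N t) \<le> h t" if t: "t \<in> {0..pi/2}" for N and t :: real
  proof -
    have su: "(\<lambda>k. - gk k t) sums (- ln (cos (t/2)))" using gk_sums[OF tt(1)[OF t]] by (rule sums_minus)
    have "(\<Sum>k<N. - gk k t) \<le> suminf (\<lambda>k. - gk k t)"
      by (rule sum_le_suminf) (use su gk_nonpos[OF tt(1)[OF t]] in \<open>auto simp: sums_iff\<close>)
    hence a: "- (\<Sum>k<N. gk k t) \<le> - ln (cos (t/2))" using su by (simp add: sums_iff sum_negf)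
    have b: "(\<Sum>k<N. gk k t) \<le> 0" by (rule sum_nonpos) (use gk_nonpos[OF tt(1)[OF t]] in auto)
    have tm: "0 \<le> t^m" using tt(2)[OF t] by simp
    have "norm (f N t) = t^m * (- (\<Sum>k<N. gk k t))"
      unfolding f_def using b tm by (simp add: sum_distrib_left[symmetric] abs_mult abs_of_nonpos)
    also have "\<dots> \<le> t^m * (- ln (cos (t/2)))" by (rule mult_left_mono[OF a tm])
    finally show ?thesis by (simp add: h_def)
  qed
  have conv: "(\<lambda>N. f N t) \<longlonglongrightarrow> g t" if t: "t \<in> {0..pi/2}" for t
  proof -
    have "(\<lambda>N. \<Sum>k<N. gk k t) \<longlonglongrightarrow> ln (cos (t/2))"
      using gk_sums[OF tt(1)[OF t]] by (simp add: sums_def)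
    hence "(\<lambda>N. t^m * (\<Sum>k<N. gk k t)) \<longlonglongrightarrow> t^m * ln (cos (t/2))" by (rule tendsto_mult_left)
    thus ?thesis by (simp add: f_def g_def sum_distrib_left)
  qed
  have "(\<lambda>N. integral {0..pi/2} (f N)) \<longlonglongrightarrow> integral {0..pi/2} g"
    by (rule dominated_convergence(2)[OF _ hint le conv]) (use fint in \<open>auto simp: integrable_on_def\<close>)
  moreover have "integral {0..pi/2} (f N) = (\<Sum>k<N. I k)" for N using fint by (rule integral_unique)
  ultimately show ?thesis unfolding sums_def I_def g_def by simp
qed

lemma L_sums: "(\<lambda>k. ln (1 - 1/(4*real (2*k+1)^2))) sums (- ln 2 / 2)"
proof -
  have "\<bar>pi/2\<bar> < pi" using pi_gt_zero by simp
  from gk_sums[OF this] have "(\<lambda>k. gk k (pi/2)) sums ln (cos (pi/4))" by simp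
  moreover have "gk k (pi/2) = ln (1 - 1/(4*real (2*k+1)^2))" for k
  proof -
    have "(pi/2)^2 / (pi^2 * real (2*k+1)^2) = 1/(4*real (2*k+1)^2)"
      using pi_gt_zero by (simp add: power_divide field_simps)
    thus ?thesis by (simp add: gk_def)
  qed
  moreover have "ln (cos (pi/4)) = - ln 2 / 2"
    by (simp add: cos_45 ln_div ln_sqrt)
  ultimately show ?thesis by simp
qed

lemma LogP_of_real:
  assumes "y < 1"
  shows "LogP r (of_real y) = of_real (LPr r y)"
proof -
  have "Ln (1 - complex_of_real y) = of_real (ln (1 - y))"
    using Ln_of_real[of "1 - y"] assms by simp
  thus ?thesis unfolding LogP_def LPr_def by simp
qed



lemma final_alg:
  fixes c d J S L :: real and m :: nat
  assumes c: "c = pi^(m+1)" and d: "d = 2^(m+1)" and dp: "d > 0"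
    and S: "S = ((pi/2)^(m+1)/(m+1) * (- L / 2) - J) / ((2*pi)^(m+1)/(m+1))"
  shows "J = - (c / (m+1)) * (L / 2^(m+2) + d * S)"
proof -
  have cp: "c > 0" using c by simp
  have e1: "(pi/2)^(m+1) = c/d" using c d by (simp add: power_divide)
  have e2: "(2*pi)^(m+1) = d*c" using c d by (simp add: power_mult_distrib)
  have e3: "(2::real)^(m+2) = 2*d" using d by simp
  have m1: "real m + 1 > 0" by simp
  define M where "M = real m + 1"
  have M: "real (m+1) = M" "M > 0" by (auto simp: M_def)
  have "d*S = -L/(2*d) - M*J/c" unfolding S e1 e2 M(1) using cp dp M(2) by (simp add: field_simps)
  hence "L/(2*d) + d*S = -(M*J/c)" by simp
  hence "- (c / M) * (L / (2*d) + d * S) = J" using cp M(2) by simp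
  thus ?thesis unfolding e3 M(1) by simp
qed

lemma term_complex:
  "(of_nat (2*k+1) / 2) ^ (r - 1) *
      (LogP r (2 * (1/4) / of_nat (2*k+1)) + (-1) ^ (r - 1) * LogP r (- 2 * (1/4) / of_nat (2*k+1)))
   = complex_of_real (Fn r (real (2*k+1)) (1/4))"
proof -
  have a1: "(2 * (1/4) / of_nat (2*k+1) :: complex) = of_real (2*(1/4)/real (2*k+1))" by simp
  have a2: "(- 2 * (1/4) / of_nat (2*k+1) :: complex) = of_real (- 2*(1/4)/real (2*k+1))" by simp
  have l1: "2*(1/4)/real (2*k+1) < 1" by (simp add: divide_less_eq)
  have l2: "- 2*(1/4)/real (2*k+1) < 1" by (simp add: divide_less_eq) (smt (verit) divide_nonneg_nonneg of_nat_0_le_iff)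
  show ?thesis unfolding a1 a2 LogP_of_real[OF l1] LogP_of_real[OF l2] Fn_def by simp
qed

theorem corollary2p2:
  fixes r :: nat
  assumes "r \<ge> 2"
  shows "complex_of_real (integral {0..pi/2} (\<lambda>\<theta>. \<theta> ^ (r - 2) * ln (cos (\<theta> / 2))))
    = - (of_real (pi ^ (r - 1)) / of_nat (r - 1)) *
        (of_real (ln 2) / 2 ^ r + 2 ^ (r - 1) * logC r (1/4))"
proof -
  obtain m where r: "r = m + 2" using assms by (metis add.commute le_Suc_ex)
  have r2: "r - 2 = m" "r - 1 = m + 1" using r by auto
  define J where "J = integral {0..pi/2} (\<lambda>t. t^m * ln (cos (t/2)))"
  define Fk where "Fk k = Fn (m+2) (real (2*k+1)) (1/4)" for k
  define S where "S = ((pi/2)^(m+1)/(m+1) * (- ln 2 / 2) - J) / ((2*pi)^(m+1)/(m+1))"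
  have cne: "(2*pi)^(m+1)/(m+1) \<noteq> 0" by simp
  have IS: "(\<lambda>k. (pi/2)^(m+1)/(m+1) * ln (1 - 1/(4*real (2*k+1)^2))
       - (2*pi)^(m+1)/(m+1) * Fk k) sums J"
    using integral_sums[of m] unfolding J_def Fk_def .
  have LS: "(\<lambda>k. (pi/2)^(m+1)/(m+1) * ln (1 - 1/(4*real (2*k+1)^2))) sums ((pi/2)^(m+1)/(m+1) * (- ln 2 / 2))"
    by (rule sums_mult[OF L_sums])
  have "(\<lambda>k. ((pi/2)^(m+1)/(m+1) * ln (1 - 1/(4*real (2*k+1)^2))
       - ((pi/2)^(m+1)/(m+1) * ln (1 - 1/(4*real (2*k+1)^2))
       - (2*pi)^(m+1)/(m+1) * Fk k)) / ((2*pi)^(m+1)/(m+1))) sums S"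
    unfolding S_def by (rule sums_divide[OF sums_diff[OF LS IS]])
  also have "(\<lambda>k. ((pi/2)^(m+1)/(m+1) * ln (1 - 1/(4*real (2*k+1)^2))
       - ((pi/2)^(m+1)/(m+1) * ln (1 - 1/(4*real (2*k+1)^2))
       - (2*pi)^(m+1)/(m+1) * Fk k)) / ((2*pi)^(m+1)/(m+1))) = Fk"
    using cne by (auto simp: fun_eq_iff)
  finally have FS: "Fk sums S" .
  have "logC r (1/4) = (\<Sum>k. complex_of_real (Fk k))"
    unfolding logC_def Fk_def term_complex r by simp
  also have "\<dots> = of_real S" by (rule sums_unique[OF sums_of_real[OF FS], symmetric])
  finally have lc: "logC r (1/4) = of_real S" .
  have JJ: "J = - (pi^(m+1) / (m+1)) * (ln 2 / 2^(m+2) + 2^(m+1) * S)"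
    by (rule final_alg[OF refl refl _ S_def]) simp
  show ?thesis unfolding r2 lc
    by (simp add: J_def[symmetric] JJ r)
qed


end
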